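(* Let $n\le l$ be positive integers, let $L_l=\{a_1<\dots<a_l\}$ be the linearly ordered semilattice of $l$ elements, and let $t(X)=s(X)$ be an equation over $L_l$ in the variables $X=\{x_1,\dots,x_n\}$ in which every variable occurs. Let $Y=V(t(X)=s(X))\subseteq L_l^n$ be its solution set. Then $Y=\bigcup_{\sigma} Y_\sigma$, where the union is over all permutations $\sigma$ of $\{1,\dots,n\}$ of the first or second kind with respect to $t(X)=s(X)$.
   Context: $L_l$ has multiplication $a_ia_j=a_{\min(i,j)}$. A term is a commutative word in $x_1,\dots,x_n$; $\mathrm{Var}(t)$ is the set of variables occurring in $t$. An equation is an ordered pair of terms $t(X)=s(X)$; $P\in L_l^n$ is a solution if $t(P)=s(P)$; $x\le y$ abbreviates $xy=x$. For a system $S$, $V(S)$ is its set of common solutions. A permutation $\sigma$ of $\{1,\dots,n\}$ is of the first kind if $x_{\sigma(1)}\in\mathrm{Var}(t)\cap\mathrm{Var}(s)$, and of the second kind if $x_{\sigma(1)}\in\mathrm{Var}(s)\setminus\mathrm{Var}(t)$ and $x_{\sigma(2)}\in\mathrm{Var}(t)\setminus\mathrm{Var}(s)$. For $\sigma$ of the first kind, $Y_\sigma=V(\{x_{\sigma(i)}\le x_{\sigma(i+1)}:1\le i\le n-1\})$; for $\sigma$ of the second kind, $Y_\sigma=V(\{x_{\sigma(1)}=x_{\sigma(2)}\}\cup\{x_{\sigma(i)}\le x_{\sigma(i+1)}:2\le i\le n-1\})$. *)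

theory Defs
  imports "HOL-Library.Multiset" "HOL-Library.FuncSet" "HOL-Combinatorics.Permutations"
begin

text \<open>The chain semilattice L_l is modelled as {1..l} :: nat set, the element a_i being i;
  the product a_i a_j = a_{min(i,j)} is min. Variables x_1..x_n are indices 1..n.
  A term (commutative word) is a nonempty multiset of variable indices.\<close>

type_synonym sl_term = "nat multiset"
type_synonym sl_eq = "sl_term \<times> sl_term"

definition Var :: "sl_term \<Rightarrow> nat set" where
  "Var t = set_mset t"

text \<open>Value of a word at a point: the product of the values of its letters, i.e. (as the
  product is min, which is commutative, associative, idempotent) the minimum of their values.\<close>
definition eval_term :: "sl_term \<Rightarrow> (nat \<Rightarrow> nat) \<Rightarrow> nat" where
  "eval_term t P = Min (P ` set_mset t)"

definition points :: "nat \<Rightarrow> nat \<Rightarrow> (nat \<Rightarrow> nat) set" where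
  "points l n = PiE {1..n} (\<lambda>_. {1..l})"

definition V :: "nat \<Rightarrow> nat \<Rightarrow> sl_eq set \<Rightarrow> (nat \<Rightarrow> nat) set" where
  "V l n S = {P \<in> points l n. \<forall>(t, s) \<in> S. eval_term t P = eval_term s P}"

text \<open>x \<le> y abbreviates the equation x y = x; x = y is the equation between the one-letter words.\<close>
definition leq_eq :: "nat \<Rightarrow> nat \<Rightarrow> sl_eq" where
  "leq_eq x y = ({#x, y#}, {#x#})"

definition var_eq :: "nat \<Rightarrow> nat \<Rightarrow> sl_eq" where
  "var_eq x y = ({#x#}, {#y#})"

definition first_kind :: "nat \<Rightarrow> sl_term \<Rightarrow> sl_term \<Rightarrow> (nat \<Rightarrow> nat) \<Rightarrow> bool" where
  "first_kind n t s \<sigma> \<longleftrightarrow> \<sigma> permutes {1..n} \<and> \<sigma> 1 \<in> Var t \<inter> Var s"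

definition second_kind :: "nat \<Rightarrow> sl_term \<Rightarrow> sl_term \<Rightarrow> (nat \<Rightarrow> nat) \<Rightarrow> bool" where
  "second_kind n t s \<sigma> \<longleftrightarrow> \<sigma> permutes {1..n} \<and> \<sigma> 1 \<in> Var s - Var t \<and> \<sigma> 2 \<in> Var t - Var s"

definition Y_first :: "nat \<Rightarrow> nat \<Rightarrow> (nat \<Rightarrow> nat) \<Rightarrow> (nat \<Rightarrow> nat) set" where
  "Y_first l n \<sigma> = V l n {leq_eq (\<sigma> i) (\<sigma> (i + 1)) | i. 1 \<le> i \<and> i \<le> n - 1}"

definition Y_second :: "nat \<Rightarrow> nat \<Rightarrow> (nat \<Rightarrow> nat) \<Rightarrow> (nat \<Rightarrow> nat) set" where
  "Y_second l n \<sigma> = V l n ({var_eq (\<sigma> 1) (\<sigma> 2)} \<union>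
                              {leq_eq (\<sigma> i) (\<sigma> (i + 1)) | i. 2 \<le> i \<and> i \<le> n - 1})"

end

theory Submission
  imports Defs
begin

lemma eval2: "eval_term {#x, y#} P = min (P x) (P y)"
  by (simp add: eval_term_def)

lemma eval1: "eval_term {#x#} P = P x"
  by (simp add: eval_term_def)

lemma sorted_const:
  assumes eq: "\<forall>p\<in>set ps. \<forall>q\<in>set ps. (P::nat\<Rightarrow>nat) p = P q"
  shows "sorted (map P ps)"
  unfolding sorted_iff_nth_mono
proof (intro allI impI)
  fix i j assume ij: "i \<le> j" "j < length (map P ps)"
  then have "i < length ps" "j < length ps" by auto
  then have "P (ps ! i) = P (ps ! j)" using eq nth_mem by blast
  then show "map P ps ! i \<le> map P ps ! j" using \<open>i < length ps\<close> \<open>j < length ps\<close> by simp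
qed

lemma sort_perm:
  fixes P :: "nat \<Rightarrow> nat"
  assumes d: "distinct ps" and sub: "set ps \<subseteq> {1..n}"
    and low: "\<forall>p\<in>set ps. \<forall>x\<in>{1..n}. P p \<le> P x"
    and eq: "\<forall>p\<in>set ps. \<forall>q\<in>set ps. P p = P q"
  shows "\<exists>\<sigma>. \<sigma> permutes {1..n} \<and> (\<forall>k<length ps. \<sigma> (k+1) = ps!k)
           \<and> (\<forall>i j. 1\<le>i \<longrightarrow> i\<le>j \<longrightarrow> j\<le>n \<longrightarrow> P (\<sigma> i) \<le> P (\<sigma> j))"
proof -
  define rest where "rest = sort_key P (filter (\<lambda>x. x\<notin>set ps) [1..<n+1])"
  define ys where "ys = ps @ rest"
  have setr: "set rest = {1..n} - set ps" unfolding rest_def by auto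
  have dist: "distinct ys" unfolding ys_def using d setr
    by (simp add: rest_def)
  have setys: "set ys = {1..n}" unfolding ys_def using setr sub by auto
  have len: "length ys = n" using distinct_card[OF dist] setys by simp
  have sorted: "sorted (map P ys)"
    unfolding ys_def map_append sorted_append
    using sorted_const[OF eq] low setr by (auto simp: rest_def)
  define \<sigma> where "\<sigma> i = (if i \<in> {1..n} then ys!(i-1) else i)" for i
  have inj: "inj_on \<sigma> {1..n}"
  proof (rule inj_onI)
    fix i j assume "i \<in> {1..n}" "j \<in> {1..n}" "\<sigma> i = \<sigma> j"
    then have "ys!(i-1) = ys!(j-1)" by (simp add: \<sigma>_def)
    then have "i - 1 = j - 1" using nth_eq_iff_index_eq[OF dist] len \<open>i \<in> {1..n}\<close> \<open>j \<in> {1..n}\<close> by auto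
    then show "i = j" using \<open>i \<in> {1..n}\<close> \<open>j \<in> {1..n}\<close> by auto
  qed
  have img: "\<sigma> ` {1..n} = {1..n}"
  proof
    show "\<sigma> ` {1..n} \<subseteq> {1..n}"
    proof
      fix y assume "y \<in> \<sigma> ` {1..n}"
      then obtain i where i: "i \<in> {1..n}" "y = ys!(i-1)" by (auto simp: \<sigma>_def)
      then have "y \<in> set ys" using len by auto
      then show "y \<in> {1..n}" using setys by simp
    qed
  next
    show "{1..n} \<subseteq> \<sigma> ` {1..n}"
    proof
      fix y assume "y \<in> {1..n}"
      then have "y \<in> set ys" using setys by simp
      then obtain k where k: "k < n" "ys!k = y" using len by (auto simp: in_set_conv_nth)
      then have "\<sigma> (k+1) = y" by (simp add: \<sigma>_def)
      moreover have "k+1 \<in> {1..n}" using k by auto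
      ultimately show "y \<in> \<sigma> ` {1..n}" by force
    qed
  qed
  have "bij_betw \<sigma> {1..n} {1..n}" using inj img by (simp add: bij_betw_def)
  then have perm: "\<sigma> permutes {1..n}"
    by (rule bij_imp_permutes) (auto simp: \<sigma>_def)
  have pre: "\<forall>k<length ps. \<sigma> (k+1) = ps!k"
  proof (intro allI impI)
    fix k assume "k < length ps"
    moreover have "length ps \<le> n" using len ys_def by auto
    ultimately show "\<sigma> (k+1) = ps!k" by (simp add: \<sigma>_def ys_def nth_append)
  qed
  have mono: "\<forall>i j. 1\<le>i \<longrightarrow> i\<le>j \<longrightarrow> j\<le>n \<longrightarrow> P (\<sigma> i) \<le> P (\<sigma> j)"
  proof (intro allI impI)
    fix i j :: nat assume "1 \<le> i" "i \<le> j" "j \<le> n"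
    then have "(map P ys)!(i-1) \<le> (map P ys)!(j-1)"
      using sorted_nth_mono[OF sorted, of "i-1" "j-1"] len by auto
    then show "P (\<sigma> i) \<le> P (\<sigma> j)" using \<open>1 \<le> i\<close> \<open>i \<le> j\<close> \<open>j \<le> n\<close> len
      by (simp add: \<sigma>_def)
  qed
  show ?thesis using perm pre mono by blast
qed


lemma eval_min:
  assumes "t \<noteq> {#}" "v \<in> P ` Var t" "\<forall>x\<in>Var t. v \<le> P x"
  shows "eval_term t P = v"
  unfolding eval_term_def using assms by (intro Min_eqI) (auto simp: Var_def)

lemma eval_in:
  assumes "t \<noteq> {#}"
  shows "eval_term t P \<in> P ` Var t" "\<forall>x\<in>Var t. eval_term t P \<le> P x"
  using assms by (auto simp: eval_term_def Var_def)

lemma V_memI: "P \<in> points l n \<Longrightarrow> (\<And>a b. (a,b) \<in> S \<Longrightarrow> eval_term a P = eval_term b P) \<Longrightarrow> P \<in> V l n S"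
  unfolding V_def by auto

lemma V_points: "P \<in> V l n S \<Longrightarrow> P \<in> points l n"
  unfolding V_def by simp

lemma V_memD: "P \<in> V l n S \<Longrightarrow> (a,b) \<in> S \<Longrightarrow> eval_term a P = eval_term b P"
  unfolding V_def by auto

lemma leq_val: "eval_term (fst (leq_eq x y)) P = eval_term (snd (leq_eq x y)) P \<longleftrightarrow> P x \<le> P y"
  unfolding leq_eq_def fst_conv snd_conv eval1 eval2 by (simp add: min_def)

lemma Y_first_chain:
  assumes "P \<in> Y_first l n \<sigma>" "1 \<le> i" "i \<le> n - 1"
  shows "P (\<sigma> i) \<le> P (\<sigma> (i+1))"
proof -
  have mem: "({#\<sigma> i, \<sigma> (i+1)#}, {#\<sigma> i#}) \<in> {leq_eq (\<sigma> i) (\<sigma> (i + 1)) | i. 1 \<le> i \<and> i \<le> n - 1}"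
    using assms(2,3) unfolding leq_eq_def by blast
  have "eval_term {#\<sigma> i, \<sigma> (i+1)#} P = eval_term {#\<sigma> i#} P"
    by (rule V_memD[OF assms(1)[unfolded Y_first_def] mem])
  then have "min (P (\<sigma> i)) (P (\<sigma> (i+1))) = P (\<sigma> i)" by (simp only: eval1 eval2)
  then show ?thesis by (metis min.cobounded2)
qed

lemma Y_second_chain:
  assumes "P \<in> Y_second l n \<sigma>" "2 \<le> i" "i \<le> n - 1"
  shows "P (\<sigma> i) \<le> P (\<sigma> (i+1))"
proof -
  have mem: "({#\<sigma> i, \<sigma> (i+1)#}, {#\<sigma> i#}) \<in> {leq_eq (\<sigma> i) (\<sigma> (i + 1)) | i. 2 \<le> i \<and> i \<le> n - 1}"
    using assms(2,3) unfolding leq_eq_def by blast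
  have "eval_term {#\<sigma> i, \<sigma> (i+1)#} P = eval_term {#\<sigma> i#} P"
    by (rule V_memD[OF assms(1)[unfolded Y_second_def]]) (rule UnI2[OF mem])
  then have "min (P (\<sigma> i)) (P (\<sigma> (i+1))) = P (\<sigma> i)" by (simp only: eval1 eval2)
  then show ?thesis by (metis min.cobounded2)
qed

lemma Y_second_12:
  assumes "P \<in> Y_second l n \<sigma>"
  shows "P (\<sigma> 1) = P (\<sigma> 2)"
proof -
  have mem: "({#\<sigma> 1#}, {#\<sigma> 2#}) \<in> {var_eq (\<sigma> 1) (\<sigma> 2)}"
    unfolding var_eq_def by simp
  have "eval_term {#\<sigma> 1#} P = eval_term {#\<sigma> 2#} P"
    by (rule V_memD[OF assms(1)[unfolded Y_second_def]]) (rule UnI1[OF mem])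
  then show ?thesis by (simp only: eval1)
qed

lemma chain_min:
  fixes P \<sigma> :: "nat \<Rightarrow> nat" and k n i :: nat
  assumes ch: "\<And>i. k \<le> i \<Longrightarrow> i \<le> n - 1 \<Longrightarrow> P (\<sigma> i) \<le> P (\<sigma> (i+1))"
    and ki: "k \<le> i" and "i \<le> n"
  shows "P (\<sigma> k) \<le> P (\<sigma> i)"
proof -
  have gen: "k + d \<le> n \<Longrightarrow> P (\<sigma> k) \<le> P (\<sigma> (k+d))" for d
  proof (induction d)
    case 0 show ?case by simp
  next
    case (Suc d)
    then have "P (\<sigma> k) \<le> P (\<sigma> (k+d))" by simp
    also have "\<dots> \<le> P (\<sigma> (k+d+1))" using ch[of "k+d"] Suc.prems by simp
    finally show ?case by simp
  qed
  show ?thesis using gen[of "i-k"] assms(2,3) by simp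
qed

theorem lemma2:
  fixes l n :: nat and t s :: sl_term
  assumes "1 \<le> n" and "n \<le> l"
    and "t \<noteq> {#}" and "s \<noteq> {#}"
    and "Var t \<union> Var s = {1..n}"
  shows "V l n {(t, s)} =
           (\<Union>\<sigma> \<in> {\<sigma>. first_kind n t s \<sigma>}. Y_first l n \<sigma>) \<union>
           (\<Union>\<sigma> \<in> {\<sigma>. second_kind n t s \<sigma>}. Y_second l n \<sigma>)"
proof
  show "V l n {(t, s)} \<subseteq> (\<Union>\<sigma> \<in> {\<sigma>. first_kind n t s \<sigma>}. Y_first l n \<sigma>) \<union>
           (\<Union>\<sigma> \<in> {\<sigma>. second_kind n t s \<sigma>}. Y_second l n \<sigma>)"
  proof
    fix P assume PV: "P \<in> V l n {(t, s)}"
    then have Pp: "P \<in> points l n" and eqts: "eval_term t P = eval_term s P"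
      by (auto simp: V_def)
    define m where "m = Min (P ` {1..n})"
    have mle: "\<forall>x\<in>{1..n}. m \<le> P x" by (simp add: m_def)
    have ne: "{1..n} \<noteq> {}" using assms(1) by auto
    have "m \<in> P ` {1..n}" unfolding m_def using ne by (intro Min_in) auto
    then obtain c where c: "c \<in> {1..n}" "P c = m" by auto
    have ge_t: "m \<le> eval_term t P" using eval_in(1)[OF assms(3), of P] mle assms(5) by auto
    have ge_s: "m \<le> eval_term s P" using eval_in(1)[OF assms(4), of P] mle assms(5) by auto
    have "eval_term t P \<le> m \<or> eval_term s P \<le> m"
    proof (cases "c \<in> Var t")
      case True then show ?thesis using c eval_in(2)[OF assms(3), of P] by fastforce
    next
      case False then have "c \<in> Var s" using c assms(5) by blast
      then show ?thesis using c eval_in(2)[OF assms(4), of P] by fastforce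
    qed
    then have et: "eval_term t P = m" and es: "eval_term s P = m"
      using ge_t ge_s eqts by auto
    obtain a where a: "a \<in> Var t" "P a = m" using eval_in(1)[OF assms(3), of P] et by auto
    obtain b where b: "b \<in> Var s" "P b = m" using eval_in(1)[OF assms(4), of P] es by auto
    show "P \<in> (\<Union>\<sigma> \<in> {\<sigma>. first_kind n t s \<sigma>}. Y_first l n \<sigma>) \<union>
           (\<Union>\<sigma> \<in> {\<sigma>. second_kind n t s \<sigma>}. Y_second l n \<sigma>)"
    proof (cases "\<exists>c\<in>Var t \<inter> Var s. P c = m")
      case True
      then obtain c where c: "c \<in> Var t \<inter> Var s" "P c = m" by auto
      have "c \<in> {1..n}" using c assms(5) by auto
      then have pre: "distinct [c]" "set [c] \<subseteq> {1..n}" "\<forall>p\<in>set [c]. \<forall>x\<in>{1..n}. P p \<le> P x"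
         "\<forall>p\<in>set [c]. \<forall>q\<in>set [c]. P p = P q" using c mle by auto
      obtain \<sigma> where \<sigma>: "\<sigma> permutes {1..n}" "\<forall>k<length [c]. \<sigma> (k+1) = [c]!k"
        "\<forall>i j. 1\<le>i \<longrightarrow> i\<le>j \<longrightarrow> j\<le>n \<longrightarrow> P (\<sigma> i) \<le> P (\<sigma> j)"
        using sort_perm[OF pre] by blast
      have fk: "first_kind n t s \<sigma>" using \<sigma>(1,2) c by (auto simp: first_kind_def)
      have "P \<in> Y_first l n \<sigma>"
        unfolding Y_first_def
      proof (rule V_memI[OF Pp])
        fix x y assume "(x, y) \<in> {leq_eq (\<sigma> i) (\<sigma> (i + 1)) |i. 1 \<le> i \<and> i \<le> n - 1}"
        then obtain i where i: "1 \<le> i" "i \<le> n - 1" "(x, y) = leq_eq (\<sigma> i) (\<sigma> (i + 1))" by blast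
        have "P (\<sigma> i) \<le> P (\<sigma> (i+1))" using \<sigma>(3) i(1,2) assms(1) by auto
        then show "eval_term x P = eval_term y P" using leq_val[of "\<sigma> i" "\<sigma> (i+1)" P] i(3)
          by (metis fst_conv snd_conv)
      qed
      then show ?thesis using fk by blast
    next
      case False
      then have abv: "a \<notin> Var s" "b \<notin> Var t" using a b by auto
      then have ab: "a \<noteq> b" using a by auto
      have "a \<in> {1..n}" "b \<in> {1..n}" using a b assms(5) by auto
      then have pre: "distinct [b,a]" "set [b,a] \<subseteq> {1..n}" "\<forall>p\<in>set [b,a]. \<forall>x\<in>{1..n}. P p \<le> P x"
         "\<forall>p\<in>set [b,a]. \<forall>q\<in>set [b,a]. P p = P q" using a b ab mle by auto
      obtain \<sigma> where \<sigma>: "\<sigma> permutes {1..n}" "\<forall>k<length [b,a]. \<sigma> (k+1) = [b,a]!k"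
        "\<forall>i j. 1\<le>i \<longrightarrow> i\<le>j \<longrightarrow> j\<le>n \<longrightarrow> P (\<sigma> i) \<le> P (\<sigma> j)"
        using sort_perm[OF pre] by blast
      have s1: "\<sigma> 1 = b" using \<sigma>(2) by (metis One_nat_def add_0 length_Cons list.size(3) nth_Cons_0 zero_less_Suc)
      have s2: "\<sigma> 2 = a" using \<sigma>(2)[rule_format, of 1] by (simp add: numeral_2_eq_2)
      have sk: "second_kind n t s \<sigma>" using \<sigma>(1) s1 s2 a b abv by (auto simp: second_kind_def)
      have "P \<in> Y_second l n \<sigma>"
        unfolding Y_second_def
      proof (rule V_memI[OF Pp])
        fix x y assume "(x, y) \<in> {var_eq (\<sigma> 1) (\<sigma> 2)} \<union> {leq_eq (\<sigma> i) (\<sigma> (i + 1)) |i. 2 \<le> i \<and> i \<le> n - 1}"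
        then show "eval_term x P = eval_term y P"
        proof
          assume "(x, y) \<in> {var_eq (\<sigma> 1) (\<sigma> 2)}"
          then show ?thesis using s1 s2 a b by (simp add: var_eq_def eval1)
        next
          assume "(x, y) \<in> {leq_eq (\<sigma> i) (\<sigma> (i + 1)) |i. 2 \<le> i \<and> i \<le> n - 1}"
          then obtain i where i: "2 \<le> i" "i \<le> n - 1" "(x, y) = leq_eq (\<sigma> i) (\<sigma> (i + 1))" by blast
          have "P (\<sigma> i) \<le> P (\<sigma> (i+1))" using \<sigma>(3) i(1,2) assms(1) by auto
          then show "eval_term x P = eval_term y P" using leq_val[of "\<sigma> i" "\<sigma> (i+1)" P] i(3)
            by (metis fst_conv snd_conv)
        qed
      qed
      then show ?thesis using sk by blast
    qed
  qed
next
  show "(\<Union>\<sigma> \<in> {\<sigma>. first_kind n t s \<sigma>}. Y_first l n \<sigma>) \<union>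
           (\<Union>\<sigma> \<in> {\<sigma>. second_kind n t s \<sigma>}. Y_second l n \<sigma>) \<subseteq> V l n {(t, s)}"
  proof
    fix P assume "P \<in> (\<Union>\<sigma> \<in> {\<sigma>. first_kind n t s \<sigma>}. Y_first l n \<sigma>) \<union>
           (\<Union>\<sigma> \<in> {\<sigma>. second_kind n t s \<sigma>}. Y_second l n \<sigma>)"
    then show "P \<in> V l n {(t, s)}"
    proof
      assume "P \<in> (\<Union>\<sigma> \<in> {\<sigma>. first_kind n t s \<sigma>}. Y_first l n \<sigma>)"
      then obtain \<sigma> where fk: "first_kind n t s \<sigma>" and PY: "P \<in> Y_first l n \<sigma>" by blast
      have Pp: "P \<in> points l n" by (rule V_points[OF PY[unfolded Y_first_def]])
      have perm: "\<sigma> permutes {1..n}" using fk by (simp add: first_kind_def)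
      have allx: "\<forall>x\<in>{1..n}. P (\<sigma> 1) \<le> P x"
      proof
        fix x assume "x \<in> {1..n}"
        then have "x \<in> \<sigma> ` {1..n}" using permutes_image[OF perm] by simp
        then obtain i where "i \<in> {1..n}" "\<sigma> i = x" by blast
        have "P (\<sigma> 1) \<le> P (\<sigma> i)"
          by (rule chain_min[of 1 n P \<sigma> i]) (use Y_first_chain[OF PY] \<open>i \<in> {1..n}\<close> in auto)
        then show "P (\<sigma> 1) \<le> P x" using \<open>\<sigma> i = x\<close> by simp
      qed
      have c: "\<sigma> 1 \<in> Var t" "\<sigma> 1 \<in> Var s" using fk by (auto simp: first_kind_def)
      have vt: "Var t \<subseteq> {1..n}" "Var s \<subseteq> {1..n}" using assms(5) by blast+
      have "eval_term t P = P (\<sigma> 1)"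
        by (rule eval_min[OF assms(3) imageI[OF c(1)]]) (use allx vt in blast)
      moreover have "eval_term s P = P (\<sigma> 1)"
        by (rule eval_min[OF assms(4) imageI[OF c(2)]]) (use allx vt in blast)
      ultimately show ?thesis by (intro V_memI[OF Pp]) simp
    next
      assume "P \<in> (\<Union>\<sigma> \<in> {\<sigma>. second_kind n t s \<sigma>}. Y_second l n \<sigma>)"
      then obtain \<sigma> where sk: "second_kind n t s \<sigma>" and PY: "P \<in> Y_second l n \<sigma>" by blast
      have Pp: "P \<in> points l n" by (rule V_points[OF PY[unfolded Y_second_def]])
      have e12: "P (\<sigma> 1) = P (\<sigma> 2)" by (rule Y_second_12[OF PY])
      have perm: "\<sigma> permutes {1..n}" using sk by (simp add: second_kind_def)
      have allx: "\<forall>x\<in>{1..n}. P (\<sigma> 1) \<le> P x"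
      proof
        fix x assume "x \<in> {1..n}"
        then have "x \<in> \<sigma> ` {1..n}" using permutes_image[OF perm] by simp
        then obtain i where "i \<in> {1..n}" "\<sigma> i = x" by blast
        show "P (\<sigma> 1) \<le> P x"
        proof (cases "i = 1")
          case True then show ?thesis using \<open>\<sigma> i = x\<close> by simp
        next
          case False
          then have i2: "2 \<le> i" "i \<le> n" using \<open>i \<in> {1..n}\<close> by auto
          have "P (\<sigma> 2) \<le> P (\<sigma> i)"
            using chain_min[of 2 n P \<sigma> i, OF Y_second_chain[OF PY] i2] by blast
          then show ?thesis using e12 \<open>\<sigma> i = x\<close> by simp
        qed
      qed
      have c: "\<sigma> 2 \<in> Var t" "\<sigma> 1 \<in> Var s" using sk by (auto simp: second_kind_def)
      have vt: "Var t \<subseteq> {1..n}" "Var s \<subseteq> {1..n}" using assms(5) by blast+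
      have "eval_term t P = P (\<sigma> 2)"
      proof (rule eval_min[OF assms(3) imageI[OF c(1)]])
        show "\<forall>x\<in>Var t. P (\<sigma> 2) \<le> P x" using allx vt unfolding e12[symmetric] by blast
      qed
      then have "eval_term t P = P (\<sigma> 1)" using e12 by simp
      moreover have "eval_term s P = P (\<sigma> 1)"
        by (rule eval_min[OF assms(4) imageI[OF c(2)]]) (use allx vt in blast)
      ultimately show ?thesis by (intro V_memI[OF Pp]) simp
    qed
  qed
qed

end
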